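(* Let $A$ be an $n\times n$ decomposable generalized tournament matrix, let $I$ be a nontrivial clan of $A$, and let $x\in I$. Then $A$ is inseparable if and only if $A[([n]\setminus I)\cup\{x\}]$ is inseparable.
   Context: A generalized tournament matrix of order $n$ is a real $n\times n$ matrix $M=(m_{ij})$ with nonnegative entries satisfying $M+M^{t}=J_n-I_n$. Write $[n]=\{1,\ldots,n\}$; $M[Z]$ is the principal submatrix indexed by $Z$ (itself a generalized tournament matrix on index set $Z$). A clan of $M$ (with index set $V$) is a subset $X\subseteq V$ such that for all $i,j\in X$ and $k\in V\setminus X$, $m_{ik}=m_{jk}$ and $m_{ki}=m_{kj}$; the empty set, singletons and $V$ are trivial clans; $M$ is decomposable if it has a nontrivial clan. $M$ is separable if $V$ can be partitioned into two nonempty clans, and inseparable otherwise. *)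

theory Defs
  imports Complex_Main
begin

text \<open>A real matrix is represented as a function of type nat => nat => real;
  the index set V is carried explicitly. The principal submatrix M[Z] is M
  considered on the index set Z.\<close>

definition gen_tournament :: "(nat \<Rightarrow> nat \<Rightarrow> real) \<Rightarrow> nat set \<Rightarrow> bool" where
  "gen_tournament M V \<longleftrightarrow>
     (\<forall>i\<in>V. \<forall>j\<in>V. M i j \<ge> 0 \<and> M i j + M j i = (if i = j then 0 else 1))"

definition clan :: "(nat \<Rightarrow> nat \<Rightarrow> real) \<Rightarrow> nat set \<Rightarrow> nat set \<Rightarrow> bool" where
  "clan M V X \<longleftrightarrow> X \<subseteq> V \<and>
     (\<forall>i\<in>X. \<forall>j\<in>X. \<forall>k\<in>V - X. M i k = M j k \<and> M k i = M k j)"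

definition trivial_clan :: "nat set \<Rightarrow> nat set \<Rightarrow> bool" where
  "trivial_clan V X \<longleftrightarrow> X = {} \<or> (\<exists>a. X = {a}) \<or> X = V"

definition nontrivial_clan :: "(nat \<Rightarrow> nat \<Rightarrow> real) \<Rightarrow> nat set \<Rightarrow> nat set \<Rightarrow> bool" where
  "nontrivial_clan M V X \<longleftrightarrow> clan M V X \<and> \<not> trivial_clan V X"

definition decomposable :: "(nat \<Rightarrow> nat \<Rightarrow> real) \<Rightarrow> nat set \<Rightarrow> bool" where
  "decomposable M V \<longleftrightarrow> (\<exists>X. nontrivial_clan M V X)"

definition separable :: "(nat \<Rightarrow> nat \<Rightarrow> real) \<Rightarrow> nat set \<Rightarrow> bool" where
  "separable M V \<longleftrightarrow> (\<exists>X Y. X \<noteq> {} \<and> Y \<noteq> {} \<and> X \<inter> Y = {} \<and> X \<union> Y = V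
      \<and> clan M V X \<and> clan M V Y)"

definition inseparable :: "(nat \<Rightarrow> nat \<Rightarrow> real) \<Rightarrow> nat set \<Rightarrow> bool" where
  "inseparable M V \<longleftrightarrow> \<not> separable M V"

end

theory Submission imports Defs begin
lemma clan_restrict:
  assumes "clan M V X" "U \<subseteq> V"
  shows "clan M U (X \<inter> U)"
  using assms unfolding clan_def by blast

lemma clanD: "clan M V X \<Longrightarrow> i \<in> X \<Longrightarrow> j \<in> X \<Longrightarrow> k \<in> V \<Longrightarrow> k \<notin> X \<Longrightarrow> M i k = M j k \<and> M k i = M k j"
  unfolding clan_def by blast
lemma clan_sub: "clan M V X \<Longrightarrow> X \<subseteq> V"
  unfolding clan_def by blast
lemma clanI: "X \<subseteq> V \<Longrightarrow> (\<And>i j k. i \<in> X \<Longrightarrow> j \<in> X \<Longrightarrow> k \<in> V \<Longrightarrow> k \<notin> X \<Longrightarrow> M i k = M j k \<and> M k i = M k j) \<Longrightarrow> clan M V X"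
  unfolding clan_def by blast
lemma sepI: "X \<noteq> {} \<Longrightarrow> Y \<noteq> {} \<Longrightarrow> X \<inter> Y = {} \<Longrightarrow> X \<union> Y = V \<Longrightarrow> clan M V X \<Longrightarrow> clan M V Y \<Longrightarrow> separable M V"
  unfolding separable_def by blast

lemma aux_sep:
  assumes cI: "clan A V I" and xI: "x \<in> I" and ne: "V - I \<noteq> {}"
    and cX: "clan A V X" and cY: "clan A V Y" and d: "X \<inter> Y = {}" and u: "X \<union> Y = V"
    and Xne: "X \<noteq> {}" and sub: "X \<subseteq> I - {x}"
  shows "separable A ((V - I) \<union> {x})"
proof -
  obtain y where y: "y \<in> X" using Xne by blast
  have yI: "y \<in> I" using y sub by blast
  have yV: "y \<in> V" "y \<notin> Y" using y u d by blast+
  have VIY: "V - I \<subseteq> Y" using sub u by blast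
  have xV: "x \<in> V" using clan_sub[OF cI] xI by blast
  have c1: "clan A ((V - I) \<union> {x}) {x}" by (rule clanI) auto
  have c2: "clan A ((V - I) \<union> {x}) (V - I)"
  proof (rule clanI)
    fix i j k assume i: "i \<in> V - I" and j: "j \<in> V - I" and k: "k \<in> V - I \<union> {x}" "k \<notin> V - I"
    have kx: "k = x" using k by blast
    have "A i x = A i y" "A x i = A y i" using clanD[OF cI xI yI, of i] i by auto
    moreover have "A j x = A j y" "A x j = A y j" using clanD[OF cI xI yI, of j] j by auto
    moreover have "A i y = A j y" "A y i = A y j"
      using clanD[OF cY, of i j y] i j VIY yV by auto
    ultimately show "A i k = A j k \<and> A k i = A k j" using kx by simp
  qed blast
  show ?thesis by (rule sepI[OF _ _ _ _ c1 c2]) (use ne xI in auto)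
qed

theorem lemma5p4:
  fixes A :: "nat \<Rightarrow> nat \<Rightarrow> real" and n :: nat and I :: "nat set" and x :: nat
  assumes "gen_tournament A {1..n}"
    and "decomposable A {1..n}"
    and "nontrivial_clan A {1..n} I"
    and "x \<in> I"
  shows "inseparable A {1..n} \<longleftrightarrow> inseparable A (({1..n} - I) \<union> {x})"
proof -
  define V where "V = {1..n::nat}"
  define W where "W = (V - I) \<union> {x}"
  have cI: "clan A V I" and ntI: "\<not> trivial_clan V I"
    using assms(3) unfolding nontrivial_clan_def V_def by auto
  have IV: "I \<subseteq> V" using clan_sub[OF cI] .
  have ne: "V - I \<noteq> {}" using ntI IV unfolding trivial_clan_def by blast
  have xI: "x \<in> I" by fact
  have WV: "W \<subseteq> V" using IV xI W_def by blast
  have "separable A V \<longleftrightarrow> separable A W"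
  proof
    assume "separable A V"
    then obtain X Y where XY: "X \<noteq> {}" "Y \<noteq> {}" "X \<inter> Y = {}" "X \<union> Y = V"
      "clan A V X" "clan A V Y" unfolding separable_def by blast
    show "separable A W"
    proof (cases "X \<inter> W = {}")
      case True
      then have "X \<subseteq> I - {x}" using XY(4) W_def by blast
      then show ?thesis using aux_sep[OF cI xI ne XY(5) XY(6) XY(3) XY(4) XY(1)] W_def by simp
    next
      case F1: False
      show ?thesis
      proof (cases "Y \<inter> W = {}")
        case True
        then have "Y \<subseteq> I - {x}" using XY(4) W_def by blast
        moreover have "Y \<inter> X = {}" "Y \<union> X = V" using XY by blast+
        ultimately show ?thesis using aux_sep[OF cI xI ne XY(6) XY(5) _ _ XY(2)] W_def by simp
      next
        case False
        have "clan A W (X \<inter> W)" "clan A W (Y \<inter> W)"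
          using clan_restrict[OF XY(5) WV] clan_restrict[OF XY(6) WV] .
        moreover have "(X \<inter> W) \<inter> (Y \<inter> W) = {}" "(X \<inter> W) \<union> (Y \<inter> W) = W"
          using XY(3,4) WV by blast+
        ultimately show ?thesis using sepI[of "X \<inter> W" "Y \<inter> W" W A] F1 False by argo
      qed
    qed
  next
    assume "separable A W"
    then obtain X Y where XY: "X \<noteq> {}" "Y \<noteq> {}" "X \<inter> Y = {}" "X \<union> Y = W"
      "clan A W X" "clan A W Y" unfolding separable_def by blast
    have key: "separable A V" if XY: "X \<noteq> {}" "Y \<noteq> {}" "X \<inter> Y = {}" "X \<union> Y = W"
      "clan A W X" "clan A W Y" "x \<in> X" for X Y
    proof -
      have YVI: "Y \<subseteq> V - I" using XY(3,4,7) unfolding W_def by auto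
      have XW: "X \<subseteq> W" using XY(4) by blast
      have c1: "clan A V (X \<union> I)"
      proof (rule clanI)
        show "X \<union> I \<subseteq> V" using XW WV IV by blast
      next
        fix i j k assume i: "i \<in> X \<union> I" and j: "j \<in> X \<union> I" and k: "k \<in> V" "k \<notin> X \<union> I"
        have kY: "k \<in> Y" "k \<in> W" "k \<notin> X" using k XY(4) W_def by blast+
        have g: "A i k = A x k \<and> A k i = A k x" if "i \<in> X \<union> I" for i
        proof (cases "i \<in> I")
          case True then show ?thesis using clanD[OF cI True xI, of k] k by blast
        next
          case False then have "i \<in> X" using that by blast
          then show ?thesis using clanD[OF XY(5) _ XY(7), of i k] kY by blast
        qed
        show "A i k = A j k \<and> A k i = A k j" using g[OF i] g[OF j] by simp
      qed
      have c2: "clan A V Y"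
      proof (rule clanI)
        show "Y \<subseteq> V" using YVI by blast
      next
        fix i j k assume i: "i \<in> Y" and j: "j \<in> Y" and k: "k \<in> V" "k \<notin> Y"
        have g: "A i k = A j k \<and> A k i = A k j" if kX: "k \<in> X" for k
        proof -
          have "k \<in> W" "k \<notin> Y" using XY(3) XW kX by blast+
          then show ?thesis using clanD[OF XY(6) i j, of k] by simp
        qed
        show "A i k = A j k \<and> A k i = A k j"
        proof (cases "k \<in> I")
          case True
          have iV: "i \<in> V" "i \<notin> I" "j \<in> V" "j \<notin> I" using i j YVI by blast+
          have "A i k = A i x \<and> A k i = A x i" using clanD[OF cI True xI, of i] iV by simp
          moreover have "A j k = A j x \<and> A k j = A x j" using clanD[OF cI True xI, of j] iV by simp
          moreover have "A i x = A j x \<and> A x i = A x j" by (rule g[OF XY(7)])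
          ultimately show ?thesis by argo
        next
          case False then have "k \<in> X" using k XY(4) W_def by blast
          then show ?thesis by (rule g)
        qed
      qed
      have d1: "(X \<union> I) \<inter> Y = {}" using XY(3) YVI by blast
      have u1: "(X \<union> I) \<union> Y = V" using XY(4) IV xI unfolding W_def by auto
      have n1: "X \<union> I \<noteq> {}" using XY(1) by blast
      show ?thesis by (rule sepI[OF n1 XY(2) d1 u1 c1 c2])
    qed
    show "separable A V"
    proof (cases "x \<in> X")
      case True show ?thesis by (rule key[OF XY True])
    next
      case False then have "x \<in> Y" using XY(4) W_def by blast
      moreover have "Y \<inter> X = {}" "Y \<union> X = W" using XY by blast+
      ultimately show ?thesis using key[OF XY(2) XY(1) _ _ XY(6) XY(5)] by blast
    qed
  qed
  then show ?thesis unfolding inseparable_def V_def W_def by simp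
qed

end
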